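(* Let $p,p'\in(0,1)$ be constants with $p'<p$. For every one-sided $p$-error PACA $C$ there is a one-sided $p'$-error PACA $C'$ with $L(C)=L(C')$. Moreover, if $C$ has time complexity $T(n)$, then $C'$ has time complexity $O(T(n))$.
   Context: PACA: a bounded one-dimensional CA with state set $Q$, input alphabet $\Sigma\subseteq Q$, accepting states $A\subseteq Q$, boundary symbol $\$$ and two local transition functions $\delta_0,\delta_1$; at each step every cell independently tosses a fair coin $c$ and updates by $\delta_c$ applied to its left neighbor, itself and its right neighbor ($\$$ beyond borders). On input $x\in\Sigma^n$ (initial configuration $x$), a computation is accepting if at some step all cells are simultaneously in $A$. $C$ has time complexity $T$ if every accepting computation on an input of length $n$ first reaches $A^n$ at a step $<T(n)$; every PACA is required to have some such time complexity. For $p\in[0,1)$, $C$ is a one-sided $p$-error PACA for $L$ if for every input $x$: $x\in L\iff\Pr[C\text{ accepts }x]\ge1-p$ and $x\notin L\iff\Pr[C\text{ accepts }x]=0$ (probability over coin tosses); then $L(C)=L$. *)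

theory Defs
  imports Complex_Main "HOL-Library.FuncSet" "HOL-Library.Landau_Symbols"
begin

text \<open>States are natural numbers
(a finite set Q of them), the boundary symbol is represented by None,
and the two local transition functions are delta False (coin 0) and
delta True (coin 1).\<close>

record paca =
  states :: "nat set"
  inp    :: "nat set"
  acc    :: "nat set"
  delta  :: "bool \<Rightarrow> nat option \<Rightarrow> nat \<Rightarrow> nat option \<Rightarrow> nat"

definition wf_paca :: "paca \<Rightarrow> bool" where
  "wf_paca C \<longleftrightarrow> finite (states C) \<and> inp C \<subseteq> states C \<and> acc C \<subseteq> states C \<and>
     (\<forall>b l q r. q \<in> states C \<and> l \<in> insert None (Some ` states C)
                \<and> r \<in> insert None (Some ` states C) \<longrightarrow> delta C b l q r \<in> states C)"

definition step :: "paca \<Rightarrow> (nat \<Rightarrow> bool) \<Rightarrow> nat list \<Rightarrow> nat list" where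
  "step C c xs = map (\<lambda>i. delta C (c i)
        (if i = 0 then None else Some (xs ! (i - 1)))
        (xs ! i)
        (if Suc i = length xs then None else Some (xs ! Suc i))) [0..<length xs]"

primrec run :: "paca \<Rightarrow> nat list \<Rightarrow> (nat \<Rightarrow> nat \<Rightarrow> bool) \<Rightarrow> nat \<Rightarrow> nat list" where
  "run C x cs 0 = x"
| "run C x cs (Suc t) = step C (cs t) (run C x cs t)"

definition accepting_conf :: "paca \<Rightarrow> nat list \<Rightarrow> bool" where
  "accepting_conf C xs \<longleftrightarrow> set xs \<subseteq> acc C"

definition has_time_complexity :: "paca \<Rightarrow> (nat \<Rightarrow> nat) \<Rightarrow> bool" where
  "has_time_complexity C T \<longleftrightarrow>
     (\<forall>x \<in> lists (inp C). \<forall>cs t. accepting_conf C (run C x cs t) \<longrightarrow>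
        (\<exists>t' < T (length x). accepting_conf C (run C x cs t')))"

definition is_paca :: "paca \<Rightarrow> bool" where
  "is_paca C \<longleftrightarrow> wf_paca C \<and> (\<exists>T. has_time_complexity C T)"

definition coin_space :: "nat \<Rightarrow> nat \<Rightarrow> (nat \<Rightarrow> nat \<Rightarrow> bool) set" where
  "coin_space t n = PiE {..<t} (\<lambda>_. PiE {..<n} (\<lambda>_. UNIV))"

definition accept_prob_within :: "paca \<Rightarrow> nat list \<Rightarrow> nat \<Rightarrow> real" where
  "accept_prob_within C x t =
     real (card {cs \<in> coin_space t (length x). \<exists>s \<le> t. accepting_conf C (run C x cs s)})
     / real (card (coin_space t (length x)))"

text \<open>Probability that some step is accepting = limit (supremum) of the
probabilities of acceptance within t steps (continuity of measure).\<close>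
definition accept_prob :: "paca \<Rightarrow> nat list \<Rightarrow> real" where
  "accept_prob C x = (SUP t. accept_prob_within C x t)"

definition one_sided_paca :: "paca \<Rightarrow> real \<Rightarrow> nat list set \<Rightarrow> bool" where
  "one_sided_paca C p L \<longleftrightarrow> is_paca C \<and>
     (\<forall>x \<in> lists (inp C). (x \<in> L \<longleftrightarrow> accept_prob C x \<ge> 1 - p) \<and>
                         (x \<notin> L \<longleftrightarrow> accept_prob C x = 0))"

definition lang :: "paca \<Rightarrow> nat list set" where
  "lang C = {x \<in> lists (inp C). accept_prob C x > 0}"

end

theory Submission
  imports Defs "HOL-Library.Nat_Bijection"
begin

lemma length_step[simp]: "length (step C c xs) = length xs"
  by (simp add: step_def)

lemma length_run[simp]: "length (run C x cs t) = length x"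
  by (induct t) auto

lemma step_cong: "(\<And>i. i < length xs \<Longrightarrow> c i = c' i) \<Longrightarrow> step C c xs = step C c' xs"
  unfolding step_def by (rule map_cong) auto

lemma run_cong: "(\<And>a i. a < t \<Longrightarrow> i < length x \<Longrightarrow> cs a i = cs' a i) \<Longrightarrow> run C x cs t = run C x cs' t"
proof (induct t)
  case 0 then show ?case by simp
next
  case (Suc t)
  have "run C x cs t = run C x cs' t" using Suc by auto
  then show ?case using Suc.prems by (auto intro!: step_cong)
qed

lemma step_states:
  assumes "wf_paca C" "set xs \<subseteq> states C"
  shows "set (step C c xs) \<subseteq> states C"
proof
  fix y assume "y \<in> set (step C c xs)"
  then obtain i where i: "i < length xs" and y: "y = delta C (c i)
        (if i = 0 then None else Some (xs ! (i - 1)))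
        (xs ! i)
        (if Suc i = length xs then None else Some (xs ! Suc i))"
    by (auto simp: step_def)
  have "xs ! i \<in> states C" using i assms(2) nth_mem by blast
  moreover have "(if i = 0 then None else Some (xs ! (i - 1))) \<in> insert None (Some ` states C)"
    using i assms(2) nth_mem by fastforce
  moreover have "(if Suc i = length xs then None else Some (xs ! Suc i)) \<in> insert None (Some ` states C)"
    using i assms(2) nth_mem
    by (cases "Suc i = length xs") (auto intro!: imageI)
  ultimately show "y \<in> states C" using assms(1) y unfolding wf_paca_def by blast
qed

lemma run_states:
  assumes "wf_paca C" "set x \<subseteq> states C"
  shows "set (run C x cs t) \<subseteq> states C"
  using assms by (induct t) (auto intro: step_states[THEN subsetD])

definition enc :: "nat \<Rightarrow> nat \<times> nat \<times> bool \<Rightarrow> nat" where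
 "enc M s = (case s of (a,b,ph) \<Rightarrow> if a = b \<and> \<not> ph \<and> a \<le> M then a
      else M + 1 + prod_encode (a, prod_encode (b, if ph then 1 else 0)))"

definition dec :: "nat \<Rightarrow> nat \<Rightarrow> nat \<times> nat \<times> bool" where
 "dec M n = (if n \<le> M then (n,n,False) else
     (case prod_decode (n - M - 1) of (a, r) \<Rightarrow> (case prod_decode r of (b, c) \<Rightarrow> (a, b, c \<noteq> 0))))"

lemma dec_enc[simp]: "dec M (enc M s) = s"
  by (cases s) (auto simp: enc_def dec_def)

lemma inj_enc: "inj (enc M)"
  by (metis dec_enc injI)

definition MC :: "paca \<Rightarrow> nat" where "MC C = Max (states C)"

definition amp :: "paca \<Rightarrow> paca" where
 "amp C = \<lparr> states = enc (MC C) ` (states C \<times> states C \<times> UNIV),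
     inp = inp C,
     acc = enc (MC C) ` {(a,b,ph). a \<in> states C \<and> b \<in> states C \<and> (if ph then b else a) \<in> acc C},
     delta = (\<lambda>c l q r. case dec (MC C) q of (a,b,ph) \<Rightarrow>
        if ph then enc (MC C) (a, delta C c (map_option (fst o snd o dec (MC C)) l) b (map_option (fst o snd o dec (MC C)) r), False)
        else enc (MC C) (delta C c (map_option (fst o dec (MC C)) l) a (map_option (fst o dec (MC C)) r), b, True)) \<rparr>"

definition mk :: "paca \<Rightarrow> nat list \<Rightarrow> nat list \<Rightarrow> bool \<Rightarrow> nat list" where
 "mk C xs ys ph = map (\<lambda>i. enc (MC C) (xs!i, ys!i, ph)) [0..<length xs]"

lemma length_mk[simp]: "length (mk C xs ys ph) = length xs"
  by (simp add: mk_def)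

lemma step_mk_False:
  assumes "length xs = length ys"
  shows "step (amp C) c (mk C xs ys False) = mk C (step C c xs) ys True"
  using assms
  by (intro nth_equalityI) (auto simp: step_def mk_def amp_def nth_Cons' split: if_split)

lemma step_mk_True:
  assumes "length xs = length ys"
  shows "step (amp C) c (mk C xs ys True) = mk C xs (step C c ys) False"
  using assms
  by (intro nth_equalityI) (auto simp: step_def mk_def amp_def split: if_split)

lemma mk_init:
  assumes "wf_paca C" "set x \<subseteq> states C"
  shows "mk C x x False = x"
proof (rule nth_equalityI)
  show "length (mk C x x False) = length x" by simp
  fix i assume "i < length (mk C x x False)"
  then have i: "i < length x" by simp
  then have "x ! i \<in> states C" using assms(2) nth_mem by blast
  then have "x ! i \<le> MC C" unfolding MC_def using assms(1) wf_paca_def by auto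
  then show "mk C x x False ! i = x ! i" using i by (simp add: mk_def enc_def)
qed

lemma run_amp:
  assumes "wf_paca C" "set x \<subseteq> states C"
  shows "run (amp C) x cs (2*m) = mk C (run C x (\<lambda>i. cs (2*i)) m) (run C x (\<lambda>i. cs (2*i+1)) m) False
     \<and> run (amp C) x cs (2*m+1) = mk C (run C x (\<lambda>i. cs (2*i)) (Suc m)) (run C x (\<lambda>i. cs (2*i+1)) m) True"
proof (induct m)
  case 0
  have "step (amp C) (cs 0) (mk C x x False) = mk C (step C (cs 0) x) x True" by (rule step_mk_False) simp
  then show ?case using mk_init[OF assms] by simp
next
  case (Suc m)
  have e1: "2 * Suc m = Suc (2*m+1)" by simp
  have e2: "2 * Suc m + 1 = Suc (Suc (2*m+1))" by simp
  have IH1: "run (amp C) x cs (2*m+1) = mk C (run C x (\<lambda>i. cs (2*i)) (Suc m)) (run C x (\<lambda>i. cs (2*i+1)) m) True"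
    using Suc by blast
  have "run (amp C) x cs (2 * Suc m) = step (amp C) (cs (2*m+1)) (run (amp C) x cs (2*m+1))"
    by (simp only: e1 run.simps(2))
  also have "\<dots> = step (amp C) (cs (2*m+1)) (mk C (run C x (\<lambda>i. cs (2*i)) (Suc m)) (run C x (\<lambda>i. cs (2*i+1)) m) True)"
    by (simp only: IH1)
  also have "\<dots> = mk C (run C x (\<lambda>i. cs (2*i)) (Suc m)) (step C (cs (2*m+1)) (run C x (\<lambda>i. cs (2*i+1)) m)) False"
    by (rule step_mk_True) simp
  also have "\<dots> = mk C (run C x (\<lambda>i. cs (2*i)) (Suc m)) (run C x (\<lambda>i. cs (2*i+1)) (Suc m)) False"
    by simp
  finally have A: "run (amp C) x cs (2 * Suc m) = mk C (run C x (\<lambda>i. cs (2*i)) (Suc m)) (run C x (\<lambda>i. cs (2*i+1)) (Suc m)) False" .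
  moreover have "run (amp C) x cs (2 * Suc m + 1) = mk C (run C x (\<lambda>i. cs (2*i)) (Suc (Suc m))) (run C x (\<lambda>i. cs (2*i+1)) (Suc m)) True"
  proof -
    have e3: "2 * Suc m + 1 = Suc (2 * Suc m)" by simp
    have "run (amp C) x cs (2 * Suc m + 1) = step (amp C) (cs (2 * Suc m)) (run (amp C) x cs (2 * Suc m))"
      by (simp only: e3 run.simps(2))
    also have "\<dots> = mk C (step C (cs (2 * Suc m)) (run C x (\<lambda>i. cs (2*i)) (Suc m))) (run C x (\<lambda>i. cs (2*i+1)) (Suc m)) True"
      unfolding A by (rule step_mk_False) simp
    finally show ?thesis by simp
  qed
  ultimately show ?case by simp
qed

lemma ball_lt: "(\<forall>x\<in>{..<n}. P x) = (\<forall>i<(n::nat). P i)"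
  by auto

lemma acc_mk:
  assumes "length xs = length ys" "set xs \<subseteq> states C" "set ys \<subseteq> states C"
  shows "accepting_conf (amp C) (mk C xs ys ph) \<longleftrightarrow> accepting_conf C (if ph then ys else xs)"
proof -
  have st: "\<forall>i<length xs. xs!i \<in> states C \<and> ys!i \<in> states C"
    using assms nth_mem by (metis subsetD)
  have "accepting_conf (amp C) (mk C xs ys ph) \<longleftrightarrow>
     (\<forall>i<length xs. (xs!i, ys!i, ph) \<in> {(a,b,ph). a \<in> states C \<and> b \<in> states C \<and> (if ph then b else a) \<in> acc C})"
    unfolding accepting_conf_def mk_def set_map amp_def
    by (simp only: image_subset_iff inj_image_mem_iff[OF inj_enc] atLeast0LessThan ball_lt
       paca.select_convs set_upt)
  also have "\<dots> \<longleftrightarrow> (\<forall>i<length xs. (if ph then ys!i else xs!i) \<in> acc C)"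
    using st by (cases ph) auto
  also have "\<dots> \<longleftrightarrow> accepting_conf C (if ph then ys else xs)"
    using assms(1) by (cases ph) (auto simp: accepting_conf_def set_conv_nth)
  finally show ?thesis .
qed

lemma wf_amp:
  assumes "wf_paca C"
  shows "wf_paca (amp C)"
  unfolding wf_paca_def
proof (intro conjI allI impI)
  have fin: "finite (states C)" using assms wf_paca_def by auto
  show "finite (states (amp C))" using fin by (simp add: amp_def)
  show "inp (amp C) \<subseteq> states (amp C)"
  proof
    fix a assume "a \<in> inp (amp C)"
    then have a: "a \<in> states C" using assms by (auto simp: amp_def wf_paca_def)
    then have "a \<le> MC C" using fin by (simp add: MC_def)
    then have "a = enc (MC C) (a,a,False)" by (simp add: enc_def)
    then show "a \<in> states (amp C)" using a by (auto simp: amp_def)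
  qed
  show "acc (amp C) \<subseteq> states (amp C)" by (auto simp: amp_def)
  fix b l q r
  assume H: "q \<in> states (amp C) \<and> l \<in> insert None (Some ` states (amp C)) \<and> r \<in> insert None (Some ` states (amp C))"
  then obtain a1 a2 ph where q: "q = enc (MC C) (a1,a2,ph)" "a1 \<in> states C" "a2 \<in> states C"
    by (auto simp: amp_def)
  have L: "map_option (fst o dec (MC C)) l \<in> insert None (Some ` states C)"
       "map_option (fst o snd o dec (MC C)) l \<in> insert None (Some ` states C)"
    using H by (auto simp: amp_def)
  have R: "map_option (fst o dec (MC C)) r \<in> insert None (Some ` states C)"
       "map_option (fst o snd o dec (MC C)) r \<in> insert None (Some ` states C)"
    using H by (auto simp: amp_def)
  show "delta (amp C) b l q r \<in> states (amp C)"
    using q L R assms unfolding wf_paca_def by (auto simp: amp_def)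
qed

lemma inp_amp[simp]: "inp (amp C) = inp C" by (simp add: amp_def)

lemma acc_run_amp:
  assumes "wf_paca C" "set x \<subseteq> states C"
  shows "accepting_conf (amp C) (run (amp C) x cs (2*m)) \<longleftrightarrow> accepting_conf C (run C x (\<lambda>i. cs (2*i)) m)"
    and "accepting_conf (amp C) (run (amp C) x cs (2*m+1)) \<longleftrightarrow> accepting_conf C (run C x (\<lambda>i. cs (2*i+1)) m)"
proof -
  have r1: "run (amp C) x cs (2*m) = mk C (run C x (\<lambda>i. cs (2*i)) m) (run C x (\<lambda>i. cs (2*i+1)) m) False"
    using run_amp[OF assms] by blast
  have r2: "run (amp C) x cs (2*m+1) = mk C (run C x (\<lambda>i. cs (2*i)) (Suc m)) (run C x (\<lambda>i. cs (2*i+1)) m) True"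
    using run_amp[OF assms] by blast
  show "accepting_conf (amp C) (run (amp C) x cs (2*m)) \<longleftrightarrow> accepting_conf C (run C x (\<lambda>i. cs (2*i)) m)"
    unfolding r1 by (subst acc_mk) (auto simp: run_states[OF assms])
  show "accepting_conf (amp C) (run (amp C) x cs (2*m+1)) \<longleftrightarrow> accepting_conf C (run C x (\<lambda>i. cs (2*i+1)) m)"
    unfolding r2 by (subst acc_mk) (auto simp: run_states[OF assms] simp del: run.simps(2))
qed

lemma tc_amp:
  assumes "wf_paca C" "has_time_complexity C T"
  shows "has_time_complexity (amp C) (\<lambda>n. 2 * T n)"
  unfolding has_time_complexity_def
proof (intro ballI allI impI)
  fix x cs t
  assume x: "x \<in> lists (inp (amp C))" and a: "accepting_conf (amp C) (run (amp C) x cs t)"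
  have xs: "set x \<subseteq> states C" using x assms(1) by (auto simp: wf_paca_def)
  have xi: "x \<in> lists (inp C)" using x by simp
  obtain m where "t = 2*m \<or> t = 2*m+1" by (metis dvd_mult_div_cancel odd_two_times_div_two_succ)
  then show "\<exists>t'<2 * T (length x). accepting_conf (amp C) (run (amp C) x cs t')"
  proof
    assume "t = 2*m"
    then have "accepting_conf C (run C x (\<lambda>i. cs (2*i)) m)" using a acc_run_amp[OF assms(1) xs] by simp
    then obtain m' where "m' < T (length x)" "accepting_conf C (run C x (\<lambda>i. cs (2*i)) m')"
      using assms(2) xi unfolding has_time_complexity_def by blast
    then show ?thesis using acc_run_amp(1)[OF assms(1) xs] by (intro exI[of _ "2*m'"]) auto
  next
    assume "t = 2*m+1"
    then have "accepting_conf C (run C x (\<lambda>i. cs (2*i+1)) m)" using a acc_run_amp[OF assms(1) xs] by simp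
    then obtain m' where "m' < T (length x)" "accepting_conf C (run C x (\<lambda>i. cs (2*i+1)) m')"
      using assms(2) xi unfolding has_time_complexity_def by blast
    then show ?thesis using acc_run_amp(2)[OF assms(1) xs] by (intro exI[of _ "2*m'+1"]) auto
  qed
qed

lemma finite_row: "finite (PiE {..<n::nat} (\<lambda>_. UNIV :: bool set))"
  using finite_PiE[of "{..<n}" "\<lambda>_. UNIV::bool set"] by simp

lemma card_row: "card (PiE {..<n::nat} (\<lambda>_. UNIV :: bool set)) = 2^n"
  by (simp add: card_PiE)

lemma finite_coin_space: "finite (coin_space t n)"
  unfolding coin_space_def by (rule finite_PiE) (auto simp: finite_row)

lemma card_coin_space: "card (coin_space t n) = (2^n)^t"
  unfolding coin_space_def by (simp add: card_PiE card_row)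

lemma within_bounds: "0 \<le> accept_prob_within D x t" "accept_prob_within D x t \<le> 1"
proof -
  have "card {cs \<in> coin_space t (length x). \<exists>s \<le> t. accepting_conf D (run D x cs s)} \<le> card (coin_space t (length x))"
    by (rule card_mono[OF finite_coin_space]) auto
  moreover have "card (coin_space t (length x)) > 0" by (simp add: card_coin_space)
  ultimately show "0 \<le> accept_prob_within D x t" "accept_prob_within D x t \<le> 1"
    unfolding accept_prob_within_def by (simp_all add: divide_le_eq_1)
qed

lemma bdd_within: "bdd_above (range (accept_prob_within D x))"
  by (intro bdd_aboveI[where M=1]) (auto simp: within_bounds)

lemma within_le_prob: "accept_prob_within D x t \<le> accept_prob D x"
  unfolding accept_prob_def by (rule cSUP_upper[OF _ bdd_within]) simp

lemma prob_le1: "accept_prob D x \<le> 1"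
  unfolding accept_prob_def by (rule cSUP_least) (auto simp: within_bounds)

lemma prob_ge0: "0 \<le> accept_prob D x"
  using within_le_prob[of D x 0] within_bounds[of D x 0] by linarith

lemma prob_pos_iff: "accept_prob D x > 0 \<longleftrightarrow> (\<exists>cs s. accepting_conf D (run D x cs s))"
proof
  assume "accept_prob D x > 0"
  then obtain t where "accept_prob_within D x t > 0"
    unfolding accept_prob_def using less_cSUP_iff[OF _ bdd_within] by blast
  then have "card {cs \<in> coin_space t (length x). \<exists>s \<le> t. accepting_conf D (run D x cs s)} \<noteq> 0"
    unfolding accept_prob_within_def by (metis div_0 less_irrefl of_nat_0)
  then have "{cs \<in> coin_space t (length x). \<exists>s \<le> t. accepting_conf D (run D x cs s)} \<noteq> {}"
    by (metis card.empty)
  then show "\<exists>cs s. accepting_conf D (run D x cs s)" by blast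
next
  assume "\<exists>cs s. accepting_conf D (run D x cs s)"
  then obtain cs s where a: "accepting_conf D (run D x cs s)" by blast
  define cs0 where "cs0 = (\<lambda>a\<in>{..<s}. \<lambda>i\<in>{..<length x}. cs a i)"
  have "cs0 \<in> coin_space s (length x)" unfolding cs0_def coin_space_def by auto
  moreover have "run D x cs0 s = run D x cs s" by (rule run_cong) (simp add: cs0_def)
  ultimately have "cs0 \<in> {cs \<in> coin_space s (length x). \<exists>s' \<le> s. accepting_conf D (run D x cs s')}"
    using a by auto
  then have "card {cs \<in> coin_space s (length x). \<exists>s' \<le> s. accepting_conf D (run D x cs s')} > 0"
    using finite_coin_space by (subst card_gt_0_iff) auto
  then have "accept_prob_within D x s > 0"
    unfolding accept_prob_within_def by (simp add: card_coin_space)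
  then show "accept_prob D x > 0" using within_le_prob[of D x s] by linarith
qed

definition psi :: "nat \<Rightarrow> (nat \<Rightarrow> nat \<Rightarrow> bool) \<times> (nat \<Rightarrow> nat \<Rightarrow> bool) \<times> (nat \<Rightarrow> bool) \<Rightarrow> nat \<Rightarrow> nat \<Rightarrow> bool" where
  "psi t b = (case b of (c0, c1, e) \<Rightarrow>
     (\<lambda>j\<in>{..<2*t+1}. if j = 2*t then e else if even j then c0 (j div 2) else c1 (j div 2)))"

lemma psi_eval:
  "i < t \<Longrightarrow> psi t (c0,c1,e) (2*i) = c0 i"
  "i < t \<Longrightarrow> psi t (c0,c1,e) (2*i+1) = c1 i"
  "i < t \<Longrightarrow> psi t (c0,c1,e) (Suc (2*i)) = c1 i"
  "psi t (c0,c1,e) (2*t) = e"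
  by (auto simp: psi_def)

lemma psi_in:
  assumes "b \<in> coin_space t n \<times> coin_space t n \<times> PiE {..<n} (\<lambda>_. UNIV)"
  shows "psi t b \<in> coin_space (2*t+1) n"
proof -
  obtain c0 c1 e where b: "b = (c0,c1,e)" by (cases b) auto
  have c: "c0 \<in> coin_space t n" "c1 \<in> coin_space t n" "e \<in> PiE {..<n} (\<lambda>_. UNIV)"
    using assms b by auto
  have "\<And>j. j < 2*t+1 \<Longrightarrow> (if j = 2*t then e else if even j then c0 (j div 2) else c1 (j div 2)) \<in> PiE {..<n} (\<lambda>_. UNIV)"
  proof -
    fix j :: nat assume j: "j < 2*t+1"
    show "(if j = 2*t then e else if even j then c0 (j div 2) else c1 (j div 2)) \<in> PiE {..<n} (\<lambda>_. UNIV)"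
    proof (cases "j = 2*t")
      case True then show ?thesis using c by simp
    next
      case False
      then have "j div 2 < t" using j by auto
      then show ?thesis using c False unfolding coin_space_def by auto
    qed
  qed
  then show ?thesis unfolding b psi_def coin_space_def by auto
qed

lemma psi_inj: "inj_on (psi t) (coin_space t n \<times> coin_space t n \<times> PiE {..<n} (\<lambda>_. UNIV))"
proof (rule inj_onI)
  fix b b' assume b: "b \<in> coin_space t n \<times> coin_space t n \<times> PiE {..<n} (\<lambda>_. UNIV)"
    and b': "b' \<in> coin_space t n \<times> coin_space t n \<times> PiE {..<n} (\<lambda>_. UNIV)"
    and eq: "psi t b = psi t b'"
  obtain c0 c1 e where bb: "b = (c0,c1,e)" by (cases b) auto
  obtain d0 d1 f where bb': "b' = (d0,d1,f)" by (cases b') auto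
  have "e = f" using psi_eval(4)[of t c0 c1 e] psi_eval(4)[of t d0 d1 f] eq bb bb' by simp
  moreover have "c0 = d0"
  proof (rule PiE_ext)
    show "c0 \<in> PiE {..<t} (\<lambda>_. PiE {..<n} (\<lambda>_. UNIV))" using b bb by (simp add: coin_space_def)
    show "d0 \<in> PiE {..<t} (\<lambda>_. PiE {..<n} (\<lambda>_. UNIV))" using b' bb' by (simp add: coin_space_def)
    fix i assume "i \<in> {..<t}"
    then show "c0 i = d0 i" using psi_eval(1)[of i t c0 c1 e] psi_eval(1)[of i t d0 d1 f] eq bb bb' by simp
  qed
  moreover have "c1 = d1"
  proof (rule PiE_ext)
    show "c1 \<in> PiE {..<t} (\<lambda>_. PiE {..<n} (\<lambda>_. UNIV))" using b bb by (simp add: coin_space_def)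
    show "d1 \<in> PiE {..<t} (\<lambda>_. PiE {..<n} (\<lambda>_. UNIV))" using b' bb' by (simp add: coin_space_def)
    fix i assume "i \<in> {..<t}"
    then show "c1 i = d1 i" using psi_eval(2)[of i t c0 c1 e] psi_eval(2)[of i t d0 d1 f] eq bb bb' by simp
  qed
  ultimately show "b = b'" using bb bb' by simp
qed

lemma count_amp:
  assumes wf: "wf_paca C" and xs: "set x \<subseteq> states C"
  shows "2 * accept_prob_within C x t - (accept_prob_within C x t)^2 \<le> accept_prob_within (amp C) x (2*t+1)"
proof -
  define n where "n = length x"
  define S where "S = coin_space t n"
  define E where "E = PiE {..<n} (\<lambda>_. UNIV :: bool set)"
  define S' where "S' = coin_space (2*t+1) n"
  define A where "A = {cs \<in> S. \<exists>s \<le> t. accepting_conf C (run C x cs s)}"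
  define A' where "A' = {cs \<in> S'. \<exists>s \<le> 2*t+1. accepting_conf (amp C) (run (amp C) x cs s)}"
  define B where "B = A \<times> S \<times> E \<union> S \<times> A \<times> E"
  have finS: "finite S" "finite S'" "finite E" using finite_coin_space finite_row by (auto simp: S_def S'_def E_def)
  have AS: "A \<subseteq> S" by (auto simp: A_def)
  have finA: "finite A" "finite A'" using finS AS by (auto simp: A'_def intro: finite_subset)
  have BS: "B \<subseteq> S \<times> S \<times> E" using AS by (auto simp: B_def)
  have psiA: "psi t b \<in> A'" if bB: "b \<in> B" for b
  proof -
    obtain c0 c1 e where bb: "b = (c0,c1,e)" by (cases b) auto
    have inS': "psi t b \<in> S'" using psi_in[of b t n] BS bB by (auto simp: S_def S'_def E_def)
    from bB bb have "c0 \<in> A \<or> c1 \<in> A" by (auto simp: B_def)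
    then show ?thesis
    proof
      assume "c0 \<in> A"
      then obtain s where s: "s \<le> t" "accepting_conf C (run C x c0 s)" by (auto simp: A_def)
      have "run C x (\<lambda>i. psi t b (2*i)) s = run C x c0 s"
        by (rule run_cong) (use s in \<open>simp add: bb psi_eval\<close>)
      then have "accepting_conf (amp C) (run (amp C) x (psi t b) (2*s))"
        using acc_run_amp(1)[OF wf xs] s by simp
      then show ?thesis unfolding A'_def using inS' s by (intro CollectI conjI exI[of _ "2*s"]) auto
    next
      assume "c1 \<in> A"
      then obtain s where s: "s \<le> t" "accepting_conf C (run C x c1 s)" by (auto simp: A_def)
      have "run C x (\<lambda>i. psi t b (2*i+1)) s = run C x c1 s"
        by (rule run_cong) (use s in \<open>simp add: bb psi_eval\<close>)
      then have "accepting_conf (amp C) (run (amp C) x (psi t b) (2*s+1))"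
        using acc_run_amp(2)[OF wf xs] s by simp
      then show ?thesis unfolding A'_def using inS' s by (intro CollectI conjI exI[of _ "2*s+1"]) auto
    qed
  qed
  have "card B = card (psi t ` B)"
    using inj_on_subset[OF psi_inj BS[unfolded S_def E_def]] by (simp add: card_image S_def E_def)
  also have "\<dots> \<le> card A'" using psiA finA by (intro card_mono) auto
  finally have cB: "card B \<le> card A'" .
  have int: "(A \<times> S \<times> E) \<inter> (S \<times> A \<times> E) = A \<times> A \<times> E" using AS by auto
  have "card (A \<times> S \<times> E) + card (S \<times> A \<times> E) = card B + card (A \<times> A \<times> E)"
    using card_Un_Int[of "A \<times> S \<times> E" "S \<times> A \<times> E"] finS finA int by (simp add: B_def)
  then have cU: "card B + card A * card A * card E = 2 * card A * card S * card E"
    by (simp add: card_cartesian_product algebra_simps)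
  have cS': "card S' = card S * card S * card E"
    by (simp add: S_def S'_def E_def card_coin_space card_row power_add power_mult_distrib mult_2 power_mult)
  define a where "a = real (card A)"
  define s where "s = real (card S)"
  define e where "e = real (card E)"
  have s0: "s > 0" by (simp add: s_def S_def card_coin_space)
  have e0: "e > 0" by (simp add: e_def E_def card_row)
  have rU: "real (card B) = (2 * a * s - a * a) * e"
    using arg_cong[OF cU, of real] by (simp add: a_def s_def e_def algebra_simps)
  have rB: "(2 * a * s - a * a) * e \<le> real (card A')"
    using cB rU by (metis of_nat_le_iff)
  have w: "accept_prob_within C x t = a / s" by (simp add: accept_prob_within_def a_def s_def A_def S_def n_def)
  have w': "accept_prob_within (amp C) x (2*t+1) = real (card A') / (s * s * e)"
    using cS' by (simp add: accept_prob_within_def A'_def S'_def n_def s_def e_def)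
  have "2 * (a / s) - (a/s)^2 = (2 * a * s - a * a) * e / (s * s * e)"
    using s0 e0 by (simp add: field_simps power2_eq_square)
  also have "\<dots> \<le> real (card A') / (s * s * e)"
    using rB s0 e0 by (intro divide_right_mono) auto
  finally show ?thesis using w w' by simp
qed

lemma amp_prob:
  assumes wf: "wf_paca C" and xs: "set x \<subseteq> states C"
  shows "2 * accept_prob C x - (accept_prob C x)^2 \<le> accept_prob (amp C) x"
proof (rule field_le_epsilon)
  fix eps :: real assume eps: "0 < eps"
  define P where "P = accept_prob C x"
  have "P - eps/2 < P" using eps by simp
  then obtain t where t: "P - eps/2 < accept_prob_within C x t"
    unfolding P_def accept_prob_def using less_cSUP_iff[OF _ bdd_within] by blast
  define w where "w = accept_prob_within C x t"
  have w0: "0 \<le> w" "w \<le> P" "P \<le> 1"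
    using within_bounds within_le_prob prob_le1 by (auto simp: w_def P_def)
  have "(P - w) * (2 - P - w) \<le> (P - w) * 2"
    using w0 by (intro mult_left_mono) auto
  then have "2 * P - P^2 \<le> 2 * w - w^2 + 2 * (P - w)"
    by (simp add: algebra_simps power2_eq_square)
  also have "\<dots> \<le> accept_prob (amp C) x + eps"
    using count_amp[OF wf xs, of t] within_le_prob[of "amp C" x "2*t+1"] t
    by (simp add: w_def P_def)
  finally show "2 * accept_prob C x - (accept_prob C x)^2 \<le> accept_prob (amp C) x + eps"
    by (simp add: P_def)
qed

lemma amp_zero:
  assumes wf: "wf_paca C" and xs: "set x \<subseteq> states C" and z: "accept_prob C x = 0"
  shows "accept_prob (amp C) x = 0"
proof (rule ccontr)
  assume "accept_prob (amp C) x \<noteq> 0"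
  then have "accept_prob (amp C) x > 0" using prob_ge0[of "amp C" x] by linarith
  then obtain cs s where a: "accepting_conf (amp C) (run (amp C) x cs s)"
    using prob_pos_iff by blast
  obtain m where "s = 2*m \<or> s = 2*m+1" by (metis dvd_mult_div_cancel odd_two_times_div_two_succ)
  then have "\<exists>cs' s'. accepting_conf C (run C x cs' s')"
    using a acc_run_amp[OF wf xs] by blast
  then have "accept_prob C x > 0" using prob_pos_iff by blast
  then show False using z by simp
qed

lemma amp_main:
  assumes os: "one_sided_paca C p L" and p: "0 < p" "p < 1"
  shows "one_sided_paca (amp C) (p^2) L \<and> lang (amp C) = lang C \<and>
     (\<forall>T. has_time_complexity C T \<longrightarrow> has_time_complexity (amp C) (\<lambda>n. 2 * T n))"
proof -
  have wf: "wf_paca C" and ip: "is_paca C" using os by (auto simp: one_sided_paca_def is_paca_def)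
  have tc: "\<forall>T. has_time_complexity C T \<longrightarrow> has_time_complexity (amp C) (\<lambda>n. 2 * T n)"
    using tc_amp[OF wf] by blast
  have ip': "is_paca (amp C)" using ip wf_amp[OF wf] tc by (auto simp: is_paca_def)
  have p2: "0 < p^2" "p^2 < 1" using p by (auto simp: power_less_one_iff)
  have key: "(x \<in> L \<longrightarrow> accept_prob (amp C) x \<ge> 1 - p^2) \<and> (x \<notin> L \<longrightarrow> accept_prob (amp C) x = 0)
      \<and> (x \<in> L \<longrightarrow> accept_prob C x > 0) \<and> (x \<notin> L \<longrightarrow> accept_prob C x = 0)"
    if x: "x \<in> lists (inp C)" for x
  proof -
    have xs: "set x \<subseteq> states C" using x wf by (auto simp: wf_paca_def)
    have c: "x \<in> L \<longleftrightarrow> accept_prob C x \<ge> 1 - p" "x \<notin> L \<longleftrightarrow> accept_prob C x = 0"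
      using os x by (auto simp: one_sided_paca_def)
    have "x \<in> L \<longrightarrow> accept_prob (amp C) x \<ge> 1 - p^2"
    proof
      assume "x \<in> L"
      then have P: "accept_prob C x \<ge> 1 - p" using c by simp
      define q where "q = 1 - accept_prob C x"
      have q: "0 \<le> q" "q \<le> p" using P prob_le1[of C x] by (auto simp: q_def)
      have "q^2 \<le> p^2" using q by (intro power_mono) auto
      then have "1 - p^2 \<le> 2 * accept_prob C x - (accept_prob C x)^2"
        by (simp add: q_def power2_eq_square algebra_simps)
      then show "accept_prob (amp C) x \<ge> 1 - p^2" using amp_prob[OF wf xs] by linarith
    qed
    moreover have "x \<notin> L \<longrightarrow> accept_prob (amp C) x = 0" using c amp_zero[OF wf xs] by blast
    moreover have "x \<in> L \<longrightarrow> accept_prob C x > 0" using c p by auto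
    ultimately show ?thesis using c by blast
  qed
  have "one_sided_paca (amp C) (p^2) L"
    unfolding one_sided_paca_def
  proof (intro conjI ip' ballI)
    fix x assume "x \<in> lists (inp (amp C))"
    then have x: "x \<in> lists (inp C)" by simp
    show "(x \<in> L) = (1 - p\<^sup>2 \<le> accept_prob (amp C) x)" using key[OF x] p2 by force
    show "(x \<notin> L) = (accept_prob (amp C) x = 0)" using key[OF x] p2 by force
  qed
  moreover have "lang (amp C) = lang C"
    unfolding lang_def using key p2 by force
  ultimately show ?thesis using tc by blast
qed

lemma amp_iter:
  assumes os: "one_sided_paca C p L" and p: "0 < p" "p < 1"
  shows "\<exists>C'. one_sided_paca C' (p^(2^j)) L \<and> lang C' = lang C \<and>
     (\<forall>T. has_time_complexity C T \<longrightarrow> has_time_complexity C' (\<lambda>n. 2^j * T n))"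
proof (induct j)
  case 0 then show ?case using os by (intro exI[of _ C]) simp
next
  case (Suc j)
  then obtain C' where C': "one_sided_paca C' (p^(2^j)) L" "lang C' = lang C"
     "\<forall>T. has_time_complexity C T \<longrightarrow> has_time_complexity C' (\<lambda>n. 2^j * T n)" by blast
  have q: "0 < p^(2^j)" "p^(2^j) < 1" using p by (auto simp: power_less_one_iff)
  note A = amp_main[OF C'(1) q]
  have e: "(p^(2^j))^2 = p^(2^Suc j)" by (simp add: power_mult[symmetric] mult.commute)
  have "has_time_complexity (amp C') (\<lambda>n. 2^Suc j * T n)" if "has_time_complexity C T" for T
    using A C'(3) that by (simp add: mult.assoc)
  then show ?case using A C'(2) e by (intro exI[of _ "amp C'"]) auto
qed

lemma weaken:
  assumes "one_sided_paca C q L" "q \<le> p'" "p' < 1"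
  shows "one_sided_paca C p' L"
  using assms unfolding one_sided_paca_def by force

theorem mainTheorem6:
  fixes p p' :: real and C :: paca and L :: "nat list set"
  assumes "0 < p" "p < 1" "0 < p'" "p' < 1" "p' < p"
    and "one_sided_paca C p L"
  shows "\<exists>C'. one_sided_paca C' p' L \<and> lang C' = lang C \<and>
           (\<forall>T. has_time_complexity C T \<longrightarrow>
              (\<exists>T'. has_time_complexity C' T' \<and>
                    (\<lambda>n. real (T' n)) \<in> O(\<lambda>n. real (T n))))"
proof -
  obtain j where j: "p^j < p'" using real_arch_pow_inv[OF assms(3) assms(2)] by blast
  have "p^(2^j) \<le> p^j" using assms(1,2) by (intro power_decreasing) (auto intro: less_imp_le)
  with j have le: "p^(2^j) \<le> p'" by simp
  obtain C' where C': "one_sided_paca C' (p^(2^j)) L" "lang C' = lang C"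
     "\<forall>T. has_time_complexity C T \<longrightarrow> has_time_complexity C' (\<lambda>n. 2^j * T n)"
    using amp_iter[OF assms(6) assms(1,2)] by blast
  have "(\<lambda>n. real (2^j * T n)) \<in> O(\<lambda>n. real (T n))" for T :: "nat \<Rightarrow> nat"
    by simp
  then show ?thesis using C' weaken[OF C'(1) le assms(4)] by blast
qed

end
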